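(* Let $(\eta_k)_{k\in\mathbb{N}}$ be independent random variables with values in $\mathbb{N}$, $P(\eta_k=i)=p_{ik}$ with $p_{ik}\ge0$ and $\sum_{i=1}^\infty p_{ik}=1$ for all $k$. Suppose there exists $i_0\in\mathbb{N}$ with $$\sum_{k=1}^\infty p_{i_0k}=+\infty.$$ Then the random variable $$\eta=\sum_{k=1}^\infty\frac{(-1)^{k-1}}{\eta_1(\eta_1+\eta_2)\cdots(\eta_1+\eta_2+\dots+\eta_k)}$$ has a distribution that is singular with respect to Lebesgue measure. *)

theory Defs
  imports "HOL-Probability.Probability"
begin

definition lebesgue_singular :: "real measure \<Rightarrow> bool" where
  "lebesgue_singular \<mu> \<longleftrightarrow>
     (\<exists>N \<in> sets borel. emeasure lborel N = 0 \<and> emeasure \<mu> (space \<mu> - N) = 0)"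

text \<open>The alternating series built from a sequence (0-based indexing:
term k corresponds to the paper's term k+1).\<close>
definition eta_series :: "(nat \<Rightarrow> nat) \<Rightarrow> real" where
  "eta_series x = (\<Sum>k. (-1) ^ k / (\<Prod>j\<le>k. real (\<Sum>i\<le>j. x i)))"

end

theory Submission imports Defs begin

definition ost :: "nat \<Rightarrow> (nat \<Rightarrow> nat) \<Rightarrow> real" where
  "ost p x = (\<Sum>k. (-1)^k / (\<Prod>j\<le>k. real (p + (\<Sum>i\<le>j. x i))))"

definition oa :: "nat \<Rightarrow> (nat \<Rightarrow> nat) \<Rightarrow> nat \<Rightarrow> real" where
  "oa p x k = 1 / (\<Prod>j\<le>k. real (p + (\<Sum>i\<le>j. x i)))"

lemma eta_ost: "eta_series x = ost 0 x"
  unfolding eta_series_def ost_def by simp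

lemma prod_ge:
  assumes "\<And>i. x i \<ge> 1"
  shows "(\<Prod>j\<le>k. real (p + (\<Sum>i\<le>j. x i))) \<ge> real (Suc k)"
proof (induction k)
  case 0
  then show ?case using assms[of 0] by simp
next
  case (Suc k)
  have "(\<Sum>i\<le>Suc k. x i) \<ge> (\<Sum>i\<le>Suc k. 1)"
    by (intro sum_mono) (use assms in auto)
  then have "p + (\<Sum>i\<le>Suc k. x i) \<ge> 2" by simp
  then have q: "real (p + (\<Sum>i\<le>Suc k. x i)) \<ge> 2" by linarith
  have "real (Suc (Suc k)) \<le> real (Suc k) * 2" by simp
  also have "\<dots> \<le> (\<Prod>j\<le>k. real (p + (\<Sum>i\<le>j. x i))) * real (p + (\<Sum>i\<le>Suc k. x i))"
    by (intro mult_mono Suc q) (use Suc in linarith)+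
  finally show ?case by (simp add: atMost_Suc mult.commute)
qed

lemma ost_leib:
  fixes x :: "nat \<Rightarrow> nat" and p :: nat
  assumes "\<And>i. x i \<ge> 1"
  shows "oa p x \<longlonglongrightarrow> 0" "\<And>n. 0 \<le> oa p x n" "\<And>n. oa p x (Suc n) \<le> oa p x n"
    and "ost p x = (\<Sum>k. (-1)^k * oa p x k)"
proof -
  have pos: "\<And>k. (\<Prod>j\<le>k. real (p + (\<Sum>i\<le>j. x i))) \<ge> 1"
    by (rule order_trans[OF _ prod_ge[of x, OF assms(1)]]) simp
  show "\<And>n. 0 \<le> oa p x n" unfolding oa_def
    by (rule divide_nonneg_nonneg) (use pos in \<open>auto intro: order.trans[OF zero_le_one]\<close>)
  show "ost p x = (\<Sum>k. (-1)^k * oa p x k)" unfolding ost_def oa_def by simp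
  show "\<And>n. oa p x (Suc n) \<le> oa p x n"
  proof -
    fix n
    have "x 0 \<le> (\<Sum>i\<le>Suc n. x i)" by (rule member_le_sum) auto
    then have "(\<Sum>i\<le>Suc n. x i) \<ge> 1" using assms(1)[of 0] by linarith
    then have "p + (\<Sum>i\<le>Suc n. x i) \<ge> 1" by simp
    then have "real (p + (\<Sum>i\<le>Suc n. x i)) \<ge> 1" by linarith
    then have "(\<Prod>j\<le>n. real (p + (\<Sum>i\<le>j. x i))) \<le> (\<Prod>j\<le>n. real (p + (\<Sum>i\<le>j. x i))) * real (p + (\<Sum>i\<le>Suc n. x i))"
      using pos[of n] by (simp add: mult_le_cancel_left1)
    then show "oa p x (Suc n) \<le> oa p x n" unfolding oa_def using pos[of n]
      by (simp add: atMost_Suc frac_le)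
  qed
  show "oa p x \<longlonglongrightarrow> 0"
  proof (rule Lim_null_comparison[OF _ LIMSEQ_inverse_real_of_nat])
    show "\<forall>\<^sub>F k in sequentially. norm (oa p x k) \<le> inverse (real (Suc k))"
    proof (intro always_eventually allI)
      fix k
      have P: "real (Suc k) \<le> (\<Prod>j\<le>k. real (p + (\<Sum>i\<le>j. x i)))" by (rule prod_ge[of x, OF assms])
      have P0: "0 < real (Suc k)" by simp
      have "norm (oa p x k) = 1 / (\<Prod>j\<le>k. real (p + (\<Sum>i\<le>j. x i)))"
        unfolding oa_def using P P0 by simp
      also have "\<dots> \<le> 1 / real (Suc k)" by (rule frac_le) (use P P0 in auto)
      finally show "norm (oa p x k) \<le> inverse (real (Suc k))" by (simp add: inverse_eq_divide)
    qed
  qed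
qed

lemma ost_bounds:
  assumes "\<And>i. x i \<ge> 1"
  shows "0 \<le> ost p x" "ost p x \<le> 1 / real (p + x 0)"
proof -
  note L = ost_leib[of x p, OF assms]
  from summable_Leibniz'(2)[OF L(1-3), of 0] show "0 \<le> ost p x" using L(4) by simp
  from summable_Leibniz'(4)[OF L(1-3), of 0] show "ost p x \<le> 1 / real (p + x 0)" using L(4)
    by (simp add: oa_def)
qed

lemma ost_rec:
  assumes "\<And>i. x i \<ge> 1"
  shows "ost p x = (1 - ost (p + x 0) (\<lambda>i. x (Suc i))) / real (p + x 0)"
proof -
  have xs: "\<And>i. x (Suc i) \<ge> 1" using assms by simp
  note L = ost_leib[of x p, OF assms]
  note L2 = ost_leib[of "\<lambda>i. x (Suc i)" "p + x 0", OF xs]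
  have sa: "summable (\<lambda>k. (-1)^k * oa p x k)" by (rule summable_Leibniz'(1)[OF L(1-3)])
  have sb: "summable (\<lambda>k. (-1)^k * oa (p + x 0) (\<lambda>i. x (Suc i)) k)" by (rule summable_Leibniz'(1)[OF L2(1-3)])
  have ab: "oa p x (Suc k) = oa p x 0 * oa (p + x 0) (\<lambda>i. x (Suc i)) k" for k
  proof -
    have "(\<Prod>j\<le>Suc k. real (p + (\<Sum>i\<le>j. x i))) = real (p + x 0) * (\<Prod>j\<le>k. real (p + x 0 + (\<Sum>i\<le>j. x (Suc i))))"
      using sum.atMost_Suc_shift[of x]
      by (simp only: prod.atMost_Suc_shift sum.atMost_Suc_shift) (simp add: add.assoc)
    then show ?thesis unfolding oa_def by simp
  qed
  have "ost p x = (\<Sum>k. (-1)^k * oa p x k)" by (rule L(4))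
  also have "\<dots> = oa p x 0 + (\<Sum>k. (-1)^(Suc k) * oa p x (Suc k))"
    using suminf_split_head[OF sa] by simp
  also have "(\<Sum>k. (-1)^(Suc k) * oa p x (Suc k)) = (\<Sum>k. (- oa p x 0) * ((-1)^k * oa (p + x 0) (\<lambda>i. x (Suc i)) k))"
    by (simp add: ab mult.left_commute)
  also have "\<dots> = - oa p x 0 * (\<Sum>k. (-1)^k * oa (p + x 0) (\<lambda>i. x (Suc i)) k)" by (rule suminf_mult[OF sb])
  also have "(\<Sum>k. (-1)^k * oa (p + x 0) (\<lambda>i. x (Suc i)) k) = ost (p + x 0) (\<lambda>i. x (Suc i))" using L2(4) by simp
  finally show ?thesis by (simp add: oa_def diff_divide_distrib)
qed


fun U :: "nat \<Rightarrow> nat \<Rightarrow> nat \<Rightarrow> real set" where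
  "U i0 0 p = {y. 1 - real (p + i0) * y \<in> {0..1 / real (p + i0 + 1)}}"
| "U i0 (Suc n) p = (\<Union>m. {y. 1 - real (p + Suc m) * y \<in> U i0 n (p + Suc m)})"

lemma affine_pre_borel:
  assumes "A \<in> sets borel"
  shows "{y::real. 1 - c * y \<in> A} \<in> sets borel"
proof -
  have "(\<lambda>y::real. 1 - c * y) \<in> borel_measurable borel" by measurable
  from measurable_sets[OF this assms] show ?thesis by (simp add: vimage_def)
qed

lemma U_borel: "U i0 n p \<in> sets borel"
proof (induction n arbitrary: p)
  case 0
  then show ?case by (simp add: affine_pre_borel del: atLeastAtMost_iff)
next
  case (Suc n)
  then show ?case by (auto intro!: sets.countable_UN affine_pre_borel simp del: U.simps(1))
qed

lemma ost_in_U: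
  assumes "\<And>i. x i \<ge> 1" "x n = i0"
  shows "ost p x \<in> U i0 n p"
  using assms
proof (induction n arbitrary: p x)
  case 0
  have xs: "\<And>i. x (Suc i) \<ge> 1" using 0 by simp
  have c: "real (p + x 0) > 0" using 0(1)[of 0] by simp
  have e: "1 - real (p + x 0) * ost p x = ost (p + x 0) (\<lambda>i. x (Suc i))"
    using ost_rec[of x p, OF 0(1)] c by (simp add: field_simps)
  have b1: "0 \<le> ost (p + x 0) (\<lambda>i. x (Suc i))" by (rule ost_bounds(1)[OF xs])
  have "ost (p + x 0) (\<lambda>i. x (Suc i)) \<le> 1 / real (p + x 0 + x 1)"
    using ost_bounds(2)[OF xs, of "p + x 0"] by simp
  also have "\<dots> \<le> 1 / real (p + x 0 + 1)"
    by (rule frac_le) (use 0(1)[of 1] in auto)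
  finally show ?case using e b1 0(2) by simp
next
  case (Suc n)
  have xs: "\<And>i. x (Suc i) \<ge> 1" using Suc by simp
  have c: "real (p + x 0) > 0" using Suc(2)[of 0] by simp
  have e: "1 - real (p + x 0) * ost p x = ost (p + x 0) (\<lambda>i. x (Suc i))"
    using ost_rec[of x p, OF Suc(2)] c by (simp add: field_simps)
  have IH: "ost (p + x 0) (\<lambda>i. x (Suc i)) \<in> U i0 n (p + x 0)"
    by (rule Suc.IH) (use xs Suc(3) in auto)
  obtain m where m: "x 0 = Suc m" using Suc(2)[of 0] by (cases "x 0") auto
  have "ost p x \<in> {y. 1 - real (p + Suc m) * y \<in> U i0 n (p + Suc m)}" using e IH m by simp
  then show ?case by auto
qed

lemma affine_measure:
  assumes c: "c > 0" and A: "A \<in> sets borel"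
  shows "emeasure lborel {y::real. 1 - c * y \<in> A} = ennreal (1 / c) * emeasure lborel A"
proof -
  let ?f = "\<lambda>x::real. 1 + (- c) * x"
  have "emeasure lborel A = emeasure (density (distr lborel borel ?f) (\<lambda>_. ennreal \<bar>- c\<bar>)) A"
    using lborel_real_affine[of "-c" 1] c by simp
  also have "\<dots> = ennreal c * emeasure (distr lborel borel ?f) A"
    using A c by (subst emeasure_density_const) auto
  also have "emeasure (distr lborel borel ?f) A = emeasure lborel (?f -` A \<inter> space lborel)"
    by (rule emeasure_distr) (use A in auto)
  also have "?f -` A \<inter> space lborel = {y. 1 - c * y \<in> A}" by auto
  finally have "emeasure lborel A = ennreal c * emeasure lborel {y. 1 - c * y \<in> A}" .
  then have "ennreal (1 / c) * emeasure lborel A = (ennreal (1/c) * ennreal c) * emeasure lborel {y. 1 - c * y \<in> A}"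
    by (simp add: mult.assoc)
  also have "ennreal (1/c) * ennreal c = 1"
    using c by (simp add: ennreal_mult[symmetric])
  finally show ?thesis by simp
qed

lemma tele:
  fixes p :: nat
  shows "(\<lambda>m. 1 / ((real p + real m + 1) * (real p + real m + 2) * (real p + real m + 3)))
          sums (1 / (2 * (real p + 1) * (real p + 2)))"
proof -
  define f where "f = (\<lambda>m::nat. 1 / (2 * (real p + real m + 1) * (real p + real m + 2)))"
  have f0: "f \<longlonglongrightarrow> 0"
  proof (rule Lim_null_comparison[OF _ LIMSEQ_inverse_real_of_nat])
    show "\<forall>\<^sub>F k in sequentially. norm (f k) \<le> inverse (real (Suc k))"
    proof (intro always_eventually allI)
      fix k
      have "norm (f k) = 1 / (2 * (real p + real k + 1) * (real p + real k + 2))"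
        unfolding f_def by simp
      also have "\<dots> \<le> 1 / real (Suc k)" by (rule frac_le) (auto simp: algebra_simps)
      finally show "norm (f k) \<le> inverse (real (Suc k))" by (simp add: inverse_eq_divide)
    qed
  qed
  have "(\<lambda>n. f n - f (Suc n)) sums (f 0 - 0)" by (rule telescope_sums'[OF f0])
  moreover have "f n - f (Suc n) = 1 / ((real p + real n + 1) * (real p + real n + 2) * (real p + real n + 3))" for n
  proof -
    have key: "1 / (2 * a * (a + 1)) - 1 / (2 * (a + 1) * (a + 2)) = 1 / (a * (a + 1) * (a + 2))"
      if "a > 0" for a :: real
    proof -
      have "a \<noteq> 0" "a + 1 \<noteq> 0" "a + 2 \<noteq> 0" using that by auto
      then show ?thesis by (simp add: divide_simps) (simp add: algebra_simps)
    qed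
    show ?thesis using key[of "real p + real n + 1"] unfolding f_def
      by (simp add: algebra_simps)
  qed
  ultimately show ?thesis by (simp add: f_def)
qed

lemma U_measure:
  assumes "i0 \<ge> 1"
  shows "emeasure lborel (U i0 n p) \<le> ennreal ((1/2)^n / ((real p + 1) * (real p + 2)))"
proof (induction n arbitrary: p)
  case 0
  have c: "real (p + i0) > 0" using assms by simp
  have "emeasure lborel (U i0 0 p) = ennreal (1 / real (p + i0)) * emeasure lborel {0..1 / real (p + i0 + 1)}"
    by (subst U.simps, rule affine_measure[OF c]) simp
  also have "\<dots> = ennreal (1 / real (p + i0) * (1 / real (p + i0 + 1)))"
    by (subst ennreal_mult) auto
  also have "\<dots> \<le> ennreal ((1/2)^0 / ((real p + 1) * (real p + 2)))"
    using assms by (intro ennreal_leI) (simp add: divide_simps mult_mono)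
  finally show ?case .
next
  case (Suc n)
  define S where "S = (\<lambda>m. {y. 1 - real (p + Suc m) * y \<in> U i0 n (p + Suc m)})"
  have "emeasure lborel (U i0 (Suc n) p) = emeasure lborel (\<Union>m. S m)" by (simp add: S_def)
  also have "\<dots> \<le> (\<Sum>m. emeasure lborel (S m))"
    by (rule emeasure_subadditive_countably) (auto simp: S_def intro!: affine_pre_borel U_borel)
  also have "\<dots> \<le> (\<Sum>m. ennreal ((1/2)^n * (1 / ((real p + real m + 1) * (real p + real m + 2) * (real p + real m + 3)))))"
  proof (rule suminf_le)
    fix m
    have c: "real (p + Suc m) > 0" by simp
    have "emeasure lborel (S m) = ennreal (1 / real (p + Suc m)) * emeasure lborel (U i0 n (p + Suc m))"
      unfolding S_def by (rule affine_measure[OF c U_borel])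
    also have "\<dots> \<le> ennreal (1 / real (p + Suc m)) * ennreal ((1/2)^n / ((real (p + Suc m) + 1) * (real (p + Suc m) + 2)))"
      by (intro mult_left_mono Suc.IH) auto
    also have "\<dots> = ennreal ((1/2)^n * (1 / ((real p + real m + 1) * (real p + real m + 2) * (real p + real m + 3))))"
      by (subst ennreal_mult[symmetric]) (auto simp: field_simps)
    finally show "emeasure lborel (S m) \<le> \<dots>" .
  qed auto
  also have "\<dots> = ennreal ((1/2)^n * (1 / (2 * (real p + 1) * (real p + 2))))"
  proof -
    have "(\<lambda>m. (1/2)^n * (1 / ((real p + real m + 1) * (real p + real m + 2) * (real p + real m + 3))))
          sums ((1/2)^n * (1 / (2 * (real p + 1) * (real p + 2))))"
      by (rule sums_mult[OF tele])
    then show ?thesis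
      by (subst suminf_ennreal2) (auto simp: sums_iff)
  qed
  also have "\<dots> = ennreal ((1/2)^Suc n / ((real p + 1) * (real p + 2)))"
    by (simp add: field_simps)
  finally show ?case .
qed


definition NN :: "nat \<Rightarrow> real set" where
  "NN i0 = (\<Inter>K. \<Union>n. U i0 (n + K) 0)"

lemma NN_borel: "NN i0 \<in> sets borel"
proof -
  have "(\<Union>n. U i0 (n + K) 0) \<in> sets borel" for K by (intro sets.countable_UN) (auto intro: U_borel)
  then show ?thesis unfolding NN_def by (intro sets.countable_INT) auto
qed

lemma NN_null:
  assumes "i0 \<ge> 1"
  shows "emeasure lborel (NN i0) = 0"
proof -
  have bound: "emeasure lborel (NN i0) \<le> ennreal ((1/2)^K)" for K
  proof -
    have "emeasure lborel (NN i0) \<le> emeasure lborel (\<Union>n. U i0 (n + K) 0)"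
      unfolding NN_def by (rule emeasure_mono) (auto intro!: sets.countable_UN U_borel)
    also have "\<dots> \<le> (\<Sum>n. emeasure lborel (U i0 (n + K) 0))"
      by (rule emeasure_subadditive_countably) (auto intro: U_borel)
    also have "\<dots> \<le> (\<Sum>n. ennreal ((1/2)^K / 2 * (1/2)^n))"
    proof (rule suminf_le)
      fix n
      show "emeasure lborel (U i0 (n + K) 0) \<le> ennreal ((1/2)^K / 2 * (1/2)^n)"
        using U_measure[OF assms, of "n + K" 0] by (simp add: power_add mult.commute)
    qed auto
    also have "\<dots> = ennreal ((1/2)^K / 2 * 2)"
    proof -
      have "(\<lambda>n. (1/2::real)^K / 2 * (1/2)^n) sums ((1/2)^K / 2 * (1 / (1 - 1/2)))"
        by (rule sums_mult[OF geometric_sums]) simp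
      then show ?thesis by (subst suminf_ennreal2) (auto simp: sums_iff)
    qed
    finally show ?thesis by simp
  qed
  have fin: "emeasure lborel (NN i0) < \<infinity>"
    using bound[of 0] by (simp add: le_less_trans)
  then obtain r where r: "r \<ge> 0" "emeasure lborel (NN i0) = ennreal r"
    using fin by (auto simp: less_top_ennreal)
  show ?thesis
  proof (rule ccontr)
    assume "emeasure lborel (NN i0) \<noteq> 0"
    then have "r > 0" using r by (auto simp: less_le)
    then obtain K where "(1/2::real)^K < r" using real_arch_pow_inv[of r "1/2"] by auto
    moreover have "r \<le> (1/2)^K" using bound[of K] r by simp
    ultimately show False by simp
  qed
qed


lemma (in prob_space) bc2:
  fixes A :: "nat \<Rightarrow> 'a set"
  assumes ev: "\<And>k. A k \<in> events"
    and ind: "\<And>J. finite J \<Longrightarrow> J \<noteq> {} \<Longrightarrow> prob (\<Inter>j\<in>J. space M - A j) = (\<Prod>j\<in>J. prob (space M - A j))"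
    and ns: "\<not> summable (\<lambda>k. prob (A k))"
  shows "prob (\<Inter>k\<in>{n..}. space M - A k) = 0"
proof -
  define f where "f = (\<lambda>k. prob (A k))"
  define q where "q = prob (\<Inter>k\<in>{n..}. space M - A k)"
  have f0: "\<And>k. 0 \<le> f k" "\<And>k. f k \<le> 1" unfolding f_def by auto
  have qb: "q \<le> 1 / (1 + B)" if B: "B \<ge> 0" for B
  proof -
    have "\<not> (\<forall>N. sum f {..<N} \<le> B + sum f {..<n})"
      using ns summableI_nonneg_bounded[of f] f0 unfolding f_def by blast
    then obtain N where N: "sum f {..<N} > B + sum f {..<n}" by (auto simp: not_le)
    have "sum f {..<N} \<le> sum f ({..<n} \<union> {n..<N})"
      by (rule sum_mono2) (use f0 in auto)
    also have "\<dots> = sum f {..<n} + sum f {n..<N}"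
      by (rule sum.union_disjoint) auto
    finally have S: "sum f {n..<N} > B" using N by simp
    then have ne: "{n..<N} \<noteq> {}" using B by (cases "{n..<N} = {}") (auto simp del: atLeastLessThan_empty_iff)
    have "q \<le> prob (\<Inter>k\<in>{n..<N}. space M - A k)"
      unfolding q_def
      by (rule finite_measure_mono) (use ne ev in \<open>auto intro!: sets.countable_INT\<close>)
    also have "\<dots> = (\<Prod>k\<in>{n..<N}. 1 - f k)"
      using ind[of "{n..<N}"] ne ev by (simp add: prob_compl f_def)
    also have "\<dots> \<le> (\<Prod>k\<in>{n..<N}. exp (- f k))"
    proof (rule prod_mono)
      fix k
      have "1 + - f k \<le> exp (- f k)" by (rule exp_ge_add_one_self)
      then show "0 \<le> 1 - f k \<and> 1 - f k \<le> exp (- f k)" using f0[of k] by simp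
    qed
    also have "\<dots> = exp (- sum f {n..<N})"
      by (simp add: exp_sum[symmetric] sum_negf)
    also have "\<dots> = 1 / exp (sum f {n..<N})" by (simp add: exp_minus inverse_eq_divide)
    also have "\<dots> \<le> 1 / (1 + sum f {n..<N})"
      by (rule frac_le) (use S B exp_ge_add_one_self in auto)
    also have "\<dots> \<le> 1 / (1 + B)"
      by (rule frac_le) (use S B in auto)
    finally show ?thesis .
  qed
  have q0: "q \<ge> 0" unfolding q_def by simp
  show ?thesis
  proof (rule ccontr)
    assume "prob (\<Inter>k\<in>{n..}. space M - A k) \<noteq> 0"
    then have "q \<noteq> 0" unfolding q_def .
    then have qp: "q > 0" using q0 by simp
    have "q \<le> 1 / (1 + 1 / q)" by (rule qb) (use qp in auto)
    also have "\<dots> = q / (q + 1)" using qp by (simp add: field_simps)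
    also have "\<dots> < q" using qp by (simp add: field_simps)
    finally show False by simp
  qed
qed


theorem theorem7:
  fixes M :: "'a measure" and X :: "nat \<Rightarrow> 'a \<Rightarrow> nat"
  assumes "prob_space M"
    and "\<And>k. X k \<in> measurable M (count_space UNIV)"
    and "prob_space.indep_vars M (\<lambda>_. count_space UNIV) X UNIV"
    and "\<And>k \<omega>. \<omega> \<in> space M \<Longrightarrow> X k \<omega> \<ge> 1"
    and "\<exists>i0. (\<Sum>k. emeasure M {\<omega> \<in> space M. X k \<omega> = i0}) = \<infinity>"
  shows "lebesgue_singular (distr M borel (\<lambda>\<omega>. eta_series (\<lambda>k. X k \<omega>)))"
proof -
  interpret P: prob_space M by (rule assms(1))
  note Xm[measurable] = assms(2)
  obtain i0 where inf: "(\<Sum>k. emeasure M {\<omega> \<in> space M. X k \<omega> = i0}) = \<infinity>"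
    using assms(5) by blast
  define A where "A k = {\<omega> \<in> space M. X k \<omega> = i0}" for k
  have Aev: "A k \<in> P.events" for k unfolding A_def by measurable
  have i0: "i0 \<ge> 1"
  proof (rule ccontr)
    assume "\<not> i0 \<ge> 1"
    then have "A k = {}" for k using assms(4) unfolding A_def by fastforce
    then show False using inf unfolding A_def[symmetric] by simp
  qed
  have ns: "\<not> summable (\<lambda>k. P.prob (A k))"
  proof
    assume "summable (\<lambda>k. P.prob (A k))"
    then have "(\<Sum>k. ennreal (P.prob (A k))) = ennreal (\<Sum>k. P.prob (A k))"
      by (intro suminf_ennreal2) auto
    moreover have "(\<Sum>k. ennreal (P.prob (A k))) = \<infinity>"
      using inf unfolding A_def[symmetric] by (simp add: P.emeasure_eq_measure)
    ultimately show False by simp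
  qed
  have indsets: "P.indep_sets (\<lambda>i. {X i -` B \<inter> space M | B. B \<in> sets (count_space UNIV)}) UNIV"
    using assms(3) unfolding P.indep_vars_def2 by blast
  have compl: "space M - A k = X k -` (UNIV - {i0}) \<inter> space M" for k
    unfolding A_def by auto
  have ind: "P.prob (\<Inter>j\<in>J. space M - A j) = (\<Prod>j\<in>J. P.prob (space M - A j))"
    if "finite J" "J \<noteq> {}" for J
  proof -
    have "\<forall>J\<subseteq>UNIV. J \<noteq> {} \<longrightarrow> finite J \<longrightarrow> (\<forall>B\<in>Pi J (\<lambda>i. {X i -` B \<inter> space M | B. B \<in> sets (count_space UNIV)}).
          P.prob (\<Inter>j\<in>J. B j) = (\<Prod>j\<in>J. P.prob (B j)))"
      using indsets unfolding P.indep_sets_def by blast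
    moreover have "(\<lambda>j. space M - A j) \<in> Pi J (\<lambda>i. {X i -` B \<inter> space M | B. B \<in> sets (count_space UNIV)})"
      unfolding compl by auto
    ultimately show ?thesis using that by blast
  qed
  have zero: "P.prob (\<Inter>k\<in>{n..}. space M - A k) = 0" for n
    by (rule P.bc2[OF Aev ind ns])
  define Z where "Z = (\<Union>n. \<Inter>k\<in>{n..}. space M - A k)"
  have Zev: "Z \<in> P.events"
    unfolding Z_def using Aev by (intro sets.countable_UN sets.countable_INT) auto
  have Z0: "emeasure M Z = 0"
    unfolding Z_def
  proof (rule emeasure_UN_eq_0)
    fix n
    have "(\<Inter>k\<in>{n..}. space M - A k) \<in> P.events" using Aev by (intro sets.countable_INT) auto
    then show "emeasure M (\<Inter>k\<in>{n..}. space M - A k) = 0"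
      using zero[of n] by (simp add: P.emeasure_eq_measure)
  next
    show "range (\<lambda>n. \<Inter>k\<in>{n..}. space M - A k) \<subseteq> P.events"
      using Aev by (auto intro!: sets.countable_INT)
  qed
  define f where "f = (\<lambda>\<omega>. eta_series (\<lambda>k. X k \<omega>))"
  have fm: "f \<in> borel_measurable M"
    unfolding f_def eta_series_def by measurable
  have sub: "f -` (UNIV - NN i0) \<inter> space M \<subseteq> Z"
  proof
    fix \<omega> assume w: "\<omega> \<in> f -` (UNIV - NN i0) \<inter> space M"
    show "\<omega> \<in> Z"
    proof (rule ccontr)
      assume "\<omega> \<notin> Z"
      then have io: "\<forall>n. \<exists>k\<ge>n. X k \<omega> = i0" using w unfolding Z_def A_def by auto
      have val: "\<And>i. X i \<omega> \<ge> 1" using w assms(4) by auto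
      have "f \<omega> \<in> NN i0"
        unfolding NN_def
      proof
        fix K
        obtain k where k: "k \<ge> K" "X k \<omega> = i0" using io by blast
        have "f \<omega> \<in> U i0 ((k - K) + K) 0"
          unfolding f_def eta_ost using k by (intro ost_in_U val) auto
        then show "f \<omega> \<in> (\<Union>n. U i0 (n + K) 0)" by blast
      qed
      then show False using w by auto
    qed
  qed
  show ?thesis
    unfolding lebesgue_singular_def f_def[symmetric]
  proof (intro bexI[of _ "NN i0"] conjI)
    show "NN i0 \<in> sets borel" by (rule NN_borel)
    show "emeasure lborel (NN i0) = 0" by (rule NN_null[OF i0])
    have "emeasure (distr M borel f) (space (distr M borel f) - NN i0)
        = emeasure M (f -` (UNIV - NN i0) \<inter> space M)"
      using fm NN_borel by (simp add: emeasure_distr)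
    also have "\<dots> \<le> emeasure M Z" by (rule emeasure_mono[OF sub Zev])
    finally show "emeasure (distr M borel f) (space (distr M borel f) - NN i0) = 0"
      using Z0 by simp
  qed
qed

end
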